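(* Let $1\le k\le N$ be integers. Let $\psi^j_s,\psi^{\bar j}_{\bar s}$ ($s=1,\dots,N-k$, $j=1,\dots,k$) be $2k(N-k)$ anticommuting (Grassmann) generators, i.e. each pair of them anticommutes and each squares to zero. Let $\Phi$ be the $k\times k$ matrix with entries $\Phi_{ij}=\sum_{s=1}^{N-k}\psi^i_s\psi^{\bar j}_{\bar s}$. Let $\int D\psi$ denote the Berezin integral, the linear functional on the Grassmann algebra which vanishes on all monomials not of top degree and satisfies $$\int D\psi \prod_{s=1}^{N-k} \psi_s^{1} \psi_{\bar s}^{\bar1} \cdots \psi_s^{k} \psi_{\bar s}^{\bar k}=1.$$ For $m=1,2$ with $kN-k^2-2m\ge 0$ define $$P_m:=\int D\psi \,\bigl( \mathrm{tr}( \Phi )\bigr)^{kN-k^2-2m} \bigl(\mathrm{tr}( \Phi^2 )\bigr)^m.$$ Then \begin{align*} P_1&=(kN-k^2-2)!\,k(N-k)(N-2k) \quad(\text{if } kN-k^2-2\ge0),\\ P_2&=(kN-k^2-4)!\,k(N-k)\Bigl [k(N-k)^3-2(N-k)^2(k^2+2) +(N-k)(k^3+10k)-4k^2-2\Bigr]\quad(\text{if } kN-k^2-4\ge0). \end{align*}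
   Context: The entries of $\Phi$ are even elements of the Grassmann algebra, so they commute with each other and $\mathrm{tr}(\Phi)$, $\mathrm{tr}(\Phi^2)$ and their powers are well defined. *)

theory Defs
  imports Complex_Main "HOL-Library.Product_Lexorder"
begin

text \<open>An element is represented by its coefficient function on
sets of generators: x S is the coefficient of the ordered monomial
g1 g2 ... gr, where S = {g1 < g2 < ... < gr}. (Only finite S carry non-zero
coefficients for the elements built below.)\<close>

type_synonym 'g grass = "'g set \<Rightarrow> real"

definition inv_count :: "'g::linorder set \<Rightarrow> 'g set \<Rightarrow> nat" where
  "inv_count A B = card {(x, y). x \<in> A \<and> y \<in> B \<and> y < x}"

text \<open>Product: (ordered monomial of A) times (ordered monomial of B) equals
(-1)^(number of inversions) times the ordered monomial of A \<union> B when A, B are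
disjoint, and 0 otherwise.\<close>
definition gmul :: "'g::linorder grass \<Rightarrow> 'g grass \<Rightarrow> 'g grass" where
  "gmul a b = (\<lambda>S. \<Sum>T\<in>Pow S. (-1) ^ inv_count T (S - T) * a T * b (S - T))"

definition gone :: "'g grass" where
  "gone = (\<lambda>S. if S = {} then 1 else 0)"

definition ggen :: "'g \<Rightarrow> 'g grass" where
  "ggen g = (\<lambda>S. if S = {g} then 1 else 0)"

definition gsum :: "('i \<Rightarrow> 'g grass) \<Rightarrow> 'i set \<Rightarrow> 'g grass" where
  "gsum f A = (\<lambda>S. \<Sum>x\<in>A. f x S)"

primrec gpow :: "'g::linorder grass \<Rightarrow> nat \<Rightarrow> 'g grass" where
  "gpow a 0 = gone"
| "gpow a (Suc n) = gmul a (gpow a n)"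

definition gprod_list :: "'g::linorder grass list \<Rightarrow> 'g grass" where
  "gprod_list xs = foldr gmul xs gone"

type_synonym gen = "bool \<times> nat \<times> nat"

definition psi :: "nat \<Rightarrow> nat \<Rightarrow> gen grass" where
  "psi j s = ggen (False, j, s)"

definition psibar :: "nat \<Rightarrow> nat \<Rightarrow> gen grass" where
  "psibar j s = ggen (True, j, s)"

definition Phi :: "nat \<Rightarrow> nat \<Rightarrow> nat \<Rightarrow> nat \<Rightarrow> gen grass" where
  "Phi N k i j = gsum (\<lambda>s. gmul (psi i s) (psibar j s)) {1..N-k}"

definition trPhi :: "nat \<Rightarrow> nat \<Rightarrow> gen grass" where
  "trPhi N k = gsum (\<lambda>i. Phi N k i i) {1..k}"

definition trPhi2 :: "nat \<Rightarrow> nat \<Rightarrow> gen grass" where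
  "trPhi2 N k = gsum (\<lambda>(i, j). gmul (Phi N k i j) (Phi N k j i)) ({1..k} \<times> {1..k})"

definition top_set :: "nat \<Rightarrow> nat \<Rightarrow> gen set" where
  "top_set N k = {(b, j, s). j \<in> {1..k} \<and> s \<in> {1..N-k}}"

definition top_monomial :: "nat \<Rightarrow> nat \<Rightarrow> gen grass" where
  "top_monomial N k = gprod_list
     (concat (map (\<lambda>s. concat (map (\<lambda>j. [psi j s, psibar j s]) [1..<k+1])) [1..<N-k+1]))"

text \<open>Berezin integral: the linear functional vanishing on all monomials not of top
degree, normalised so that it equals 1 on top_monomial.\<close>
definition berezin :: "nat \<Rightarrow> nat \<Rightarrow> gen grass \<Rightarrow> real" where
  "berezin N k x = x (top_set N k) / top_monomial N k (top_set N k)"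

definition P :: "nat \<Rightarrow> nat \<Rightarrow> nat \<Rightarrow> real" where
  "P N k m = berezin N k
     (gmul (gpow (trPhi N k) (k * N - k\<^sup>2 - 2 * m)) (gpow (trPhi2 N k) m))"

end

theory Submission
  imports Defs
begin


definition hs :: "'g grass \<Rightarrow> 'g set \<Rightarrow> bool" where
  "hs a G \<longleftrightarrow> (\<forall>S. S \<noteq> G \<longrightarrow> a S = 0)"

definition fsup :: "'g grass \<Rightarrow> bool" where
  "fsup a \<longleftrightarrow> (\<forall>S. infinite S \<longrightarrow> a S = 0)"

definition sc :: "real \<Rightarrow> 'g grass \<Rightarrow> 'g grass" where
  "sc c a = (\<lambda>S. c * a S)"

lemma inv_count_sym:
  fixes G H :: "'g::linorder set"
  assumes "finite G" "finite H" "G \<inter> H = {}"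
  shows "inv_count G H + inv_count H G = card G * card H"
proof -
  let ?A = "{(x, y). x \<in> G \<and> y \<in> H \<and> y < x}"
  let ?B = "{(x, y). x \<in> G \<and> y \<in> H \<and> x < y}"
  have AB: "?A \<union> ?B = G \<times> H" using assms(3) by (auto simp: neq_iff)
  have disj: "?A \<inter> ?B = {}" by auto
  have fin: "finite (G \<times> H)" using assms by auto
  have "card ?A + card ?B = card (G \<times> H)"
    using card_Un_disjoint[of ?A ?B] AB disj fin
    by (metis (no_types, lifting) finite_Un)
  moreover have "card ?B = inv_count H G"
  proof -
    have "?B = (\<lambda>(x,y). (y,x)) ` {(x, y). x \<in> H \<and> y \<in> G \<and> y < x}" by auto
    moreover have "inj_on (\<lambda>(x,y). (y,x)) {(x, y). x \<in> H \<and> y \<in> G \<and> y < x}"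
      by (auto simp: inj_on_def)
    ultimately show ?thesis unfolding inv_count_def by (simp add: card_image)
  qed
  ultimately show ?thesis unfolding inv_count_def by (simp add: card_cartesian_product)
qed

lemma inv_count_Un_left:
  fixes A B C :: "'g::linorder set"
  assumes "finite A" "finite B" "finite C" "A \<inter> B = {}"
  shows "inv_count (A \<union> B) C = inv_count A C + inv_count B C"
proof -
  have e: "{(x, y). x \<in> A \<union> B \<and> y \<in> C \<and> y < x} =
     {(x, y). x \<in> A \<and> y \<in> C \<and> y < x} \<union> {(x, y). x \<in> B \<and> y \<in> C \<and> y < x}" by auto
  have f1: "finite {(x, y). x \<in> A \<and> y \<in> C \<and> y < x}"
    by (rule finite_subset[of _ "A \<times> C"]) (use assms in auto)
  have f2: "finite {(x, y). x \<in> B \<and> y \<in> C \<and> y < x}"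
    by (rule finite_subset[of _ "B \<times> C"]) (use assms in auto)
  show ?thesis unfolding inv_count_def e
    by (rule card_Un_disjoint[OF f1 f2]) (use assms in auto)
qed

lemma inv_count_Un_right:
  fixes A B C :: "'g::linorder set"
  assumes "finite A" "finite B" "finite C" "B \<inter> C = {}"
  shows "inv_count A (B \<union> C) = inv_count A B + inv_count A C"
proof -
  have e: "{(x, y). x \<in> A \<and> y \<in> B \<union> C \<and> y < x} =
     {(x, y). x \<in> A \<and> y \<in> B \<and> y < x} \<union> {(x, y). x \<in> A \<and> y \<in> C \<and> y < x}" by auto
  have f1: "finite {(x, y). x \<in> A \<and> y \<in> B \<and> y < x}"
    by (rule finite_subset[of _ "A \<times> B"]) (use assms in auto)
  have f2: "finite {(x, y). x \<in> A \<and> y \<in> C \<and> y < x}"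
    by (rule finite_subset[of _ "A \<times> C"]) (use assms in auto)
  show ?thesis unfolding inv_count_def e
    by (rule card_Un_disjoint[OF f1 f2]) (use assms in auto)
qed

lemma gmul_infinite: "infinite S \<Longrightarrow> gmul a b S = 0"
  unfolding gmul_def by simp

lemma fsup_gmul: "fsup (gmul a b)"
  unfolding fsup_def by (simp add: gmul_infinite)

lemma gmul_assoc: "gmul (gmul a b) c = gmul a (gmul b c)"
proof (rule ext)
  fix S :: "'a set"
  show "gmul (gmul a b) c S = gmul a (gmul b c) S"
  proof (cases "finite S")
    case False then show ?thesis by (simp add: gmul_infinite)
  next
    case True
    define sg :: "'a set \<Rightarrow> 'a set \<Rightarrow> real" where "sg X Y = (-1) ^ inv_count X Y" for X Y
    have L0: "gmul (gmul a b) c S = (\<Sum>T\<in>Pow S. \<Sum>U\<in>Pow T. sg T (S - T) * sg U (T - U) * a U * b (T - U) * c (S - T))"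
      unfolding gmul_def sg_def
      by (simp add: sum_distrib_left sum_distrib_right mult.assoc)
    have L: "gmul (gmul a b) c S = (\<Sum>(T,U)\<in>Sigma (Pow S) Pow. sg T (S - T) * sg U (T - U) * a U * b (T - U) * c (S - T))"
      unfolding L0 by (rule sum.Sigma) (use True finite_subset in auto)
    have R0: "gmul a (gmul b c) S = (\<Sum>U\<in>Pow S. \<Sum>V\<in>Pow (S - U). sg U (S - U) * sg V (S - U - V) * a U * b V * c (S - U - V))"
      unfolding gmul_def sg_def
      by (simp add: sum_distrib_left mult_ac)
    have R: "gmul a (gmul b c) S = (\<Sum>(U,V)\<in>Sigma (Pow S) (\<lambda>U. Pow (S - U)). sg U (S - U) * sg V (S - U - V) * a U * b V * c (S - U - V))"
      unfolding R0 by (rule sum.Sigma) (use True in auto)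
    have key: "sg (U \<union> V) (S - U - V) * sg U V = sg U (S - U) * sg V (S - U - V)"
      if UV: "U \<subseteq> S" "V \<subseteq> S" "U \<inter> V = {}" for U V
    proof -
      have fin: "finite U" "finite V" "finite (S - U - V)" using UV True finite_subset by auto
      have "inv_count (U \<union> V) (S - U - V) + inv_count U V = inv_count U (S - U) + inv_count V (S - U - V)"
      proof -
        have "S - U = V \<union> (S - U - V)" using UV by auto
        hence "inv_count U (S - U) = inv_count U V + inv_count U (S - U - V)"
          using inv_count_Un_right[of U V "S - U - V"] fin by auto
        moreover have "inv_count (U \<union> V) (S - U - V) = inv_count U (S - U - V) + inv_count V (S - U - V)"
          using inv_count_Un_left[of U V "S - U - V"] fin UV by auto
        ultimately show ?thesis by simp
      qed
      thus ?thesis unfolding sg_def by (metis power_add)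
    qed
    have key2: "sg (U \<union> V) (S - U - V) * sg U V * a U * b V * c (S - U - V) = sg U (S - U) * sg V (S - U - V) * a U * b V * c (S - U - V)"
      if UV: "U \<subseteq> S" "V \<subseteq> S" "U \<inter> V = {}" for U V
      using key[OF UV] by simp
    have "(\<Sum>(T,U)\<in>Sigma (Pow S) Pow. sg T (S - T) * sg U (T - U) * a U * b (T - U) * c (S - T))
        = (\<Sum>(U,V)\<in>Sigma (Pow S) (\<lambda>U. Pow (S - U)). sg U (S - U) * sg V (S - U - V) * a U * b V * c (S - U - V))"
      apply (rule sum.reindex_bij_witness[of _ "\<lambda>(U,V). (U \<union> V, U)" "\<lambda>(T,U). (U, T - U)"])
      apply (auto simp: Diff_Un[symmetric] Un_Diff)
      subgoal premises p for T U
      proof -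
        have h: "T \<subseteq> S" "U \<subseteq> T" using p by auto
        have e: "U \<union> (T - U) = T" "S - U - (T - U) = S - T" using h by auto
        have k: "sg T (S - T) * sg U (T - U) = sg U (S - U) * sg (T - U) (S - T)"
          using key[of U "T - U"] h e by auto
        have "sg U (S - U) * (sg (T - U) (S - U - (T - U)) * c (S - U - (T - U))) = sg T (S - T) * (sg U (T - U) * c (S - T))"
          unfolding e using k by (metis mult.assoc)
        then show ?thesis using p by blast
      qed
      done
    then show ?thesis using L R by simp
  qed
qed

abbreviation gzero :: "'g grass" where "gzero \<equiv> (\<lambda>S. 0)"

lemma gmul_gsum_left: "gmul (gsum f A) b = gsum (\<lambda>x. gmul (f x) b) A"
  unfolding gmul_def gsum_def
  by (rule ext) (simp add: sum_distrib_left sum_distrib_right mult_ac sum.swap[of _ "Pow _"])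

lemma gmul_gsum_right: "gmul a (gsum f A) = gsum (\<lambda>x. gmul a (f x)) A"
  unfolding gmul_def gsum_def
  by (rule ext) (simp add: sum_distrib_left sum_distrib_right mult_ac sum.swap[of _ "Pow _"])

lemma gmul_sc_left: "gmul (sc c a) b = sc c (gmul a b)"
  unfolding gmul_def sc_def by (rule ext) (simp add: sum_distrib_left mult_ac)

lemma gmul_sc_right: "gmul a (sc c b) = sc c (gmul a b)"
  unfolding gmul_def sc_def by (rule ext) (simp add: sum_distrib_left mult_ac)

lemma gmul_zero_left[simp]: "gmul gzero b = gzero"
  unfolding gmul_def by simp

lemma gmul_zero_right[simp]: "gmul a gzero = gzero"
  unfolding gmul_def by simp

lemma sc_zero[simp]: "sc c gzero = gzero" unfolding sc_def by simp

lemma sc_sc[simp]: "sc c (sc d a) = sc (c * d) a" unfolding sc_def by (simp add: mult_ac)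

lemma sc_one[simp]: "sc 1 a = a" unfolding sc_def by simp

lemma hs_gmul:
  assumes "hs a G" "hs b H" "finite G" "finite H"
  shows "gmul a b = (\<lambda>S. if G \<inter> H = {} \<and> S = G \<union> H then (-1) ^ inv_count G H * a G * b H else 0)"
proof (rule ext)
  fix S
  show "gmul a b S = (if G \<inter> H = {} \<and> S = G \<union> H then (-1) ^ inv_count G H * a G * b H else 0)"
  proof (cases "G \<inter> H = {} \<and> S = G \<union> H")
    case True
    have finS: "finite S" using True assms by auto
    have "gmul a b S = (\<Sum>T\<in>Pow S. if T = G then (-1) ^ inv_count T (S - T) * a T * b (S - T) else 0)"
      unfolding gmul_def
    proof (rule sum.cong)
      fix T assume "T \<in> Pow S"
      show "(-1) ^ inv_count T (S - T) * a T * b (S - T) = (if T = G then (-1) ^ inv_count T (S - T) * a T * b (S - T) else 0)"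
        using assms(1) unfolding hs_def by auto
    qed simp
    also have "\<dots> = (-1) ^ inv_count G (S - G) * a G * b (S - G)"
      using finS True by (simp add: sum.delta)
    also have "S - G = H" using True by auto
    finally show ?thesis using True by simp
  next
    case False
    have "gmul a b S = 0"
      unfolding gmul_def
    proof (rule sum.neutral, rule ballI)
      fix T assume T: "T \<in> Pow S"
      show "(-1) ^ inv_count T (S - T) * a T * b (S - T) = 0"
      proof (cases "T = G \<and> S - T = H")
        case True then show ?thesis using False T by auto
      next
        case False then show ?thesis using assms(1,2) unfolding hs_def by auto
      qed
    qed
    then show ?thesis using False using False by auto
  qed
qed

lemma hs_gmul_hs:
  assumes "hs a G" "hs b H" "finite G" "finite H"
  shows "hs (gmul a b) (G \<union> H)"
  unfolding hs_def hs_gmul[OF assms] by auto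

lemma hs_gmul_zero:
  assumes "hs a G" "hs b H" "finite G" "finite H" "G \<inter> H \<noteq> {}"
  shows "gmul a b = gzero"
  unfolding hs_gmul[OF assms(1-4)] using assms(5) by auto

lemma hs_gmul_val:
  assumes "hs a G" "hs b H" "finite G" "finite H" "G \<inter> H = {}"
  shows "gmul a b (G \<union> H) = (-1) ^ inv_count G H * a G * b H"
  unfolding hs_gmul[OF assms(1-4)] using assms(5) by auto

lemma gmul_comm:
  assumes "hs a G" "hs b H" "finite G" "finite H"
  shows "gmul a b = sc ((-1) ^ (card G * card H)) (gmul b a)"
proof (cases "G \<inter> H = {}")
  case True
  have e: "inv_count G H + inv_count H G = card G * card H" using inv_count_sym assms True by blast
  have "(-1::real) ^ inv_count G H = (-1) ^ (card G * card H) * (-1) ^ inv_count H G"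
  proof -
    have "(-1::real) ^ (card G * card H) * (-1) ^ inv_count H G = (-1) ^ (inv_count G H + 2 * inv_count H G)"
      unfolding e[symmetric] by (simp add: power_add)
    also have "\<dots> = (-1) ^ inv_count G H" by (simp add: power_add power_mult)
    finally show ?thesis by simp
  qed
  then show ?thesis unfolding hs_gmul[OF assms] hs_gmul[OF assms(2,1,4,3)] sc_def using True
    by (auto simp: Int_commute Un_commute mult_ac intro!: ext)
next
  case False
  then show ?thesis using hs_gmul_zero[OF assms False] hs_gmul_zero[OF assms(2,1,4,3)] False
    by (simp add: Int_commute)
qed

lemma hs_fsup: "hs a G \<Longrightarrow> finite G \<Longrightarrow> fsup a"
  unfolding hs_def fsup_def by auto

lemma fsup_gsum: "(\<And>x. x \<in> A \<Longrightarrow> fsup (f x)) \<Longrightarrow> fsup (gsum f A)"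
  unfolding fsup_def gsum_def by simp

lemma gone_left: "fsup a \<Longrightarrow> gmul gone a = a"
proof (rule ext)
  fix S assume f: "fsup a"
  show "gmul gone a S = a S"
  proof (cases "finite S")
    case True
    have "gmul gone a S = (\<Sum>T\<in>Pow S. if T = {} then (-1) ^ inv_count T (S - T) * a (S - T) else 0)"
      unfolding gmul_def gone_def by (rule sum.cong) auto
    also have "\<dots> = a S" using True by (simp add: sum.delta inv_count_def)
    finally show ?thesis .
  next
    case False then show ?thesis using f by (simp add: gmul_infinite fsup_def)
  qed
qed

lemma gone_right: "fsup a \<Longrightarrow> gmul a gone = a"
proof (rule ext)
  fix S assume f: "fsup a"
  show "gmul a gone S = a S"
  proof (cases "finite S")
    case True
    have "gmul a gone S = (\<Sum>T\<in>Pow S. if T = S then (-1) ^ inv_count T (S - T) * a T else 0)"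
      unfolding gmul_def gone_def by (rule sum.cong) auto
    also have "\<dots> = a S" using True by (simp add: sum.delta inv_count_def)
    finally show ?thesis .
  next
    case False then show ?thesis using f by (simp add: gmul_infinite fsup_def)
  qed
qed

lemma hs_ggen: "hs (ggen g) {g}" unfolding hs_def ggen_def by auto
lemma ggen_val[simp]: "ggen g {g} = 1" unfolding ggen_def by auto
lemma hs_gone: "hs gone {}" unfolding hs_def gone_def by auto
lemma hs_zero: "hs gzero G" unfolding hs_def by auto
lemma hs_sc: "hs a G \<Longrightarrow> hs (sc c a) G" unfolding hs_def sc_def by auto


definition D :: "nat \<Rightarrow> nat \<Rightarrow> nat \<Rightarrow> gen grass" where
  "D i j s = gmul (psi i s) (psibar j s)"

definition xc :: "nat \<times> nat \<Rightarrow> gen grass" where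
  "xc c = D (fst c) (fst c) (snd c)"

definition X :: "(nat \<times> nat) set \<Rightarrow> gen grass" where
  "X A = Finite_Set.fold (\<lambda>c. gmul (xc c)) gone A"

lemma hs_psi: "hs (psi i s) {(False, i, s)}" unfolding psi_def by (rule hs_ggen)
lemma hs_psibar: "hs (psibar i s) {(True, i, s)}" unfolding psibar_def by (rule hs_ggen)

lemma hs_D: "hs (D i j s) {(False, i, s), (True, j, s)}"
  using hs_gmul_hs[OF hs_psi hs_psibar] unfolding D_def by (simp add: insert_commute)

lemma D_val: "D i j s {(False, i, s), (True, j, s)} = 1"
proof -
  have e: "{(x, y). x \<in> {(False, i, s)} \<and> y \<in> {(True, j, s)} \<and> y < x} = {}" by auto
  have "inv_count {(False, i, s)} {(True, j, s)} = 0" unfolding inv_count_def e by simp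
  then show ?thesis using hs_gmul_val[OF hs_psi hs_psibar, of i s j s] unfolding D_def psi_def psibar_def
    by (simp add: insert_commute)
qed

lemma gcell: "UNIV \<times> {c} = {(False, fst c, snd c), (True, fst c, snd c)}"
  by (cases c) (auto simp: UNIV_bool)

lemma hs_xc: "hs (xc c) (UNIV \<times> {c})"
  unfolding xc_def gcell by (rule hs_D)

lemma xc_val: "xc c (UNIV \<times> {c}) = 1"
  unfolding xc_def gcell by (rule D_val)

lemma fin_cells[simp]: "finite ((UNIV :: bool set) \<times> A) \<longleftrightarrow> finite (A :: (nat \<times> nat) set)"
proof -
  have "finite (UNIV :: bool set)" by (metis UNIV_bool finite.emptyI finite.insertI)
  then show ?thesis by (auto simp: finite_cartesian_product_iff)
qed

lemma cells_ins: "(UNIV :: bool set) \<times> insert c A = (UNIV \<times> {c}) \<union> (UNIV \<times> A)" by auto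

lemma xc_comm: "gmul (xc c) (xc d) = gmul (xc d) (xc c)"
  using gmul_comm[OF hs_xc hs_xc] by (simp add: card_cartesian_product)

lemma xc_sq: "gmul (xc c) (xc c) = gzero"
  by (rule hs_gmul_zero[OF hs_xc hs_xc]) auto

interpretation Xf: comp_fun_commute "\<lambda>c. gmul (xc c)"
proof
  fix x y :: "nat \<times> nat"
  show "gmul (xc y) \<circ> gmul (xc x) = gmul (xc x) \<circ> gmul (xc y)"
  proof (rule ext)
    fix z
    have "gmul (xc y) (gmul (xc x) z) = gmul (gmul (xc y) (xc x)) z" by (rule gmul_assoc[symmetric])
    also have "\<dots> = gmul (gmul (xc x) (xc y)) z" using xc_comm[of y x] by simp
    also have "\<dots> = gmul (xc x) (gmul (xc y) z)" by (rule gmul_assoc)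
    finally show "(gmul (xc y) \<circ> gmul (xc x)) z = (gmul (xc x) \<circ> gmul (xc y)) z" by simp
  qed
qed

lemma X_empty[simp]: "X {} = gone" unfolding X_def by simp

lemma X_insert: "finite A \<Longrightarrow> c \<notin> A \<Longrightarrow> X (insert c A) = gmul (xc c) (X A)"
  unfolding X_def by simp

lemma hs_X: "finite A \<Longrightarrow> hs (X A) (UNIV \<times> A)"
proof (induction A rule: finite_induct)
  case empty then show ?case using hs_gone by simp
next
  case (insert c A)
  have h: "hs (gmul (xc c) (X A)) ((UNIV \<times> {c}) \<union> (UNIV \<times> A))"
    by (rule hs_gmul_hs[OF hs_xc insert(3)]) (use insert(1) in simp_all)
  show ?case using h unfolding cells_ins[of c A, symmetric] X_insert[OF insert(1,2)] .
qed

lemma X_nz: "finite A \<Longrightarrow> X A (UNIV \<times> A) \<noteq> 0"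
proof (induction A rule: finite_induct)
  case empty then show ?case by (simp add: gone_def)
next
  case (insert c A)
  have d: "((UNIV :: bool set) \<times> {c}) \<inter> (UNIV \<times> A) = {}" using insert by auto
  have v: "gmul (xc c) (X A) ((UNIV \<times> {c}) \<union> (UNIV \<times> A)) = (-1) ^ inv_count ((UNIV :: bool set) \<times> {c}) (UNIV \<times> A) * xc c (UNIV \<times> {c}) * X A (UNIV \<times> A)"
    by (rule hs_gmul_val[OF hs_xc hs_X[OF insert(1)] _ _ d]) (use insert(1) in simp_all)
  have "X (insert c A) (UNIV \<times> insert c A) = (-1) ^ inv_count ((UNIV :: bool set) \<times> {c}) (UNIV \<times> A) * X A (UNIV \<times> A)"
    using v xc_val[of c] unfolding cells_ins[of c A, symmetric] X_insert[OF insert(1,2)] by simp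
  then show ?case using insert(3) by simp
qed

lemma fsup_X: "finite A \<Longrightarrow> fsup (X A)"
  using hs_fsup[OF hs_X] by simp

lemma X_single: "X {c} = xc c"
proof -
  have "fsup (xc c)" by (rule hs_fsup[OF hs_xc]) simp
  then show ?thesis using X_insert[of "{}" c] gone_right by simp
qed

lemma X_mul: "finite A \<Longrightarrow> finite B \<Longrightarrow> gmul (X A) (X B) = (if A \<inter> B = {} then X (A \<union> B) else gzero)"
proof (induction A rule: finite_induct)
  case empty then show ?case by (simp add: gone_left fsup_X)
next
  case (insert c A)
  have "gmul (X (insert c A)) (X B) = gmul (xc c) (gmul (X A) (X B))"
    using insert by (simp add: X_insert gmul_assoc)
  also have "\<dots> = (if insert c A \<inter> B = {} then X (insert c A \<union> B) else gzero)"
  proof (cases "A \<inter> B = {}")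
    case False then show ?thesis using insert by auto
  next
    case True
    show ?thesis
    proof (cases "c \<in> B")
      case False then show ?thesis using insert True by (simp add: X_insert)
    next
      case cB: True
      have "X (A \<union> B) = gmul (xc c) (X (A \<union> B - {c}))"
        using X_insert[of "A \<union> B - {c}" c] cB insert by (simp add: insert_absorb)
      then have "gmul (xc c) (X (A \<union> B)) = gzero"
        by (simp add: gmul_assoc[symmetric] xc_sq)
      then show ?thesis using insert True cB by auto
    qed
  qed
  finally show ?case .
qed

definition Cs :: "nat \<Rightarrow> nat \<Rightarrow> (nat \<times> nat) set" where
  "Cs N k = {1..k} \<times> {1..N-k}"

lemma finite_Cs[simp]: "finite (Cs N k)" unfolding Cs_def by simp

lemma top_set_eq: "top_set N k = UNIV \<times> Cs N k"
  unfolding top_set_def Cs_def by auto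

definition pr2 :: "nat \<times> nat \<Rightarrow> gen grass list" where
  "pr2 c = [psi (fst c) (snd c), psibar (fst c) (snd c)]"

lemma gprod_pr2: "distinct cs \<Longrightarrow> gprod_list (concat (map pr2 cs)) = X (set cs)"
proof (induction cs)
  case Nil then show ?case by (simp add: gprod_list_def)
next
  case (Cons c cs)
  have "gprod_list (concat (map pr2 (c # cs))) = gmul (psi (fst c) (snd c)) (gmul (psibar (fst c) (snd c)) (gprod_list (concat (map pr2 cs))))"
    by (simp add: gprod_list_def pr2_def)
  also have "\<dots> = gmul (xc c) (X (set cs))"
    using Cons by (simp add: gmul_assoc[symmetric] xc_def D_def)
  also have "\<dots> = X (set (c # cs))" using Cons by (simp add: X_insert)
  finally show ?case .
qed

lemma top_monomial_eq: "top_monomial N k = X (Cs N k)"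
proof -
  define cs where "cs = concat (map (\<lambda>s. map (\<lambda>j. (j, s)) [1..<k+1]) [1..<N-k+1])"
  have l: "concat (map (\<lambda>s. concat (map (\<lambda>j. [psi j s, psibar j s]) [1..<k+1])) [1..<N-k+1]) = concat (map pr2 cs)"
  proof -
    have l1: "concat (map pr2 (concat xss)) = concat (map (\<lambda>xs. concat (map pr2 xs)) xss)" for xss :: "(nat \<times> nat) list list"
      by (induction xss) auto
    show ?thesis unfolding cs_def l1 by (simp add: comp_def pr2_def)
  qed
  have dc: "distinct js \<Longrightarrow> distinct ss \<Longrightarrow> distinct (concat (map (\<lambda>s. map (\<lambda>j. (j, s)) js) ss))"
    for js ss :: "nat list"
    by (induction ss) (auto simp: distinct_map inj_on_def)
  have d: "distinct cs" unfolding cs_def by (rule dc) simp_all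
  have st: "set cs = Cs N k"
  proof
    show "set cs \<subseteq> Cs N k" unfolding cs_def Cs_def by auto
    show "Cs N k \<subseteq> set cs"
    proof
      fix c assume "c \<in> Cs N k"
      then obtain a b where c: "c = (a, b)" "a \<in> {1..k}" "b \<in> {1..N-k}" unfolding Cs_def by auto
      then have "b \<in> set [1..<N-k+1]" "c \<in> set (map (\<lambda>j. (j, b)) [1..<k+1])" by auto
      then show "c \<in> set cs" unfolding cs_def by auto
    qed
  qed
  show ?thesis unfolding top_monomial_def l gprod_pr2[OF d] st ..
qed

lemma berezin_top: "berezin N k (X (Cs N k)) = 1"
  unfolding berezin_def top_monomial_eq top_set_eq using X_nz[of "Cs N k"] by simp

definition balanced :: "gen set \<Rightarrow> bool" where
  "balanced G \<longleftrightarrow> (\<forall>c. (False, c) \<in> G \<longleftrightarrow> (True, c) \<in> G)"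

lemma berezin_unbal:
  assumes "hs Z G" "\<not> balanced G" shows "berezin N k Z = 0"
proof -
  have "balanced (UNIV \<times> Cs N k)" unfolding balanced_def by auto
  then have "G \<noteq> UNIV \<times> Cs N k" using assms(2) by auto
  then have "Z (UNIV \<times> Cs N k) = 0" using assms(1) unfolding hs_def by auto
  then show ?thesis unfolding berezin_def top_set_eq by simp
qed

lemma berezin_gsum: "finite A \<Longrightarrow> berezin N k (gsum f A) = (\<Sum>x\<in>A. berezin N k (f x))"
  unfolding berezin_def gsum_def by (simp add: sum_divide_distrib)

lemma berezin_sc: "berezin N k (sc c Z) = c * berezin N k Z"
  unfolding berezin_def sc_def by simp

lemma berezin_zero[simp]: "berezin N k gzero = 0"
  unfolding berezin_def by simp

lemma gsum_cong: "(\<And>x. x \<in> A \<Longrightarrow> f x = g x) \<Longrightarrow> gsum f A = gsum g A"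
  unfolding gsum_def by (auto intro!: ext sum.cong)

lemma trPhi_eq: "trPhi N k = gsum xc (Cs N k)"
  unfolding trPhi_def Phi_def Cs_def gsum_def xc_def D_def
  by (rule ext) (simp add: sum.cartesian_product case_prod_beta)

lemma gpow_comm: "fsup a \<Longrightarrow> gmul a (gpow a r) = gmul (gpow a r) a"
proof (induction r)
  case 0 then show ?case by (simp add: gone_left gone_right)
next
  case (Suc r)
  have "gmul (gpow a (Suc r)) a = gmul a (gmul (gpow a r) a)" by (simp add: gmul_assoc)
  also have "\<dots> = gmul a (gpow a (Suc r))" using Suc by simp
  finally show ?case by simp
qed

definition II :: "nat \<Rightarrow> nat \<Rightarrow> nat \<Rightarrow> gen grass \<Rightarrow> real" where
  "II N k r Z = berezin N k (gmul (gpow (trPhi N k) r) Z)"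

lemma II_gsum: "finite A \<Longrightarrow> II N k r (gsum f A) = (\<Sum>x\<in>A. II N k r (f x))"
  unfolding II_def gmul_gsum_right by (simp add: berezin_gsum)

lemma II_sc: "II N k r (sc c Z) = c * II N k r Z"
  unfolding II_def gmul_sc_right by (simp add: berezin_sc)

lemma II_zero[simp]: "II N k r gzero = 0"
  unfolding II_def by simp

lemma II_Suc: "II N k (Suc r) Z = (\<Sum>c\<in>Cs N k. II N k r (gmul (xc c) Z))"
proof -
  have "II N k (Suc r) Z = berezin N k (gmul (gpow (trPhi N k) r) (gmul (trPhi N k) Z))"
  proof -
    have "fsup (trPhi N k)" unfolding trPhi_eq xc_def D_def by (rule fsup_gsum) (rule fsup_gmul)
    then show ?thesis unfolding II_def by (simp add: gpow_comm gmul_assoc)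
  qed
  also have "\<dots> = II N k r (gmul (trPhi N k) Z)" unfolding II_def ..
  also have "\<dots> = (\<Sum>c\<in>Cs N k. II N k r (gmul (xc c) Z))"
    unfolding trPhi_eq gmul_gsum_left by (simp add: II_gsum)
  finally show ?thesis .
qed

lemma II_unbal: "hs Z G \<Longrightarrow> finite G \<Longrightarrow> \<not> balanced G \<Longrightarrow> II N k r Z = 0"
proof (induction r arbitrary: Z G)
  case 0
  have "gmul gone Z = Z" using hs_fsup[OF 0(1,2)] by (rule gone_left)
  then show ?case unfolding II_def using berezin_unbal[OF 0(1,3)] by simp
next
  case (Suc r)
  have "II N k r (gmul (xc c) Z) = 0" for c
  proof (cases "(UNIV \<times> {c}) \<inter> G = {}")
    case True
    have h: "hs (gmul (xc c) Z) ((UNIV \<times> {c}) \<union> G)"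
      by (rule hs_gmul_hs[OF hs_xc Suc(2)]) (use Suc(3) in simp_all)
    have "\<not> balanced ((UNIV \<times> {c}) \<union> G)"
      using Suc(4) True unfolding balanced_def by auto
    then show ?thesis using Suc(1)[OF h] Suc(3) by simp
  next
    case False
    have "gmul (xc c) Z = gzero"
      by (rule hs_gmul_zero[OF hs_xc Suc(2)]) (use Suc(3) False in simp_all)
    then show ?thesis by simp
  qed
  then show ?case unfolding II_Suc by simp
qed

lemma II_X: "B \<subseteq> Cs N k \<Longrightarrow> card B + r = card (Cs N k) \<Longrightarrow> II N k r (X B) = fact r"
proof (induction r arbitrary: B)
  case 0
  have "B = Cs N k" using 0 by (simp add: card_subset_eq)
  then show ?case unfolding II_def using berezin_top fsup_X by (simp add: gone_left)
next
  case (Suc r)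
  have fB: "finite B" using finite_subset[OF Suc(2) finite_Cs] .
  have "II N k (Suc r) (X B) = (\<Sum>c\<in>Cs N k. II N k r (gmul (xc c) (X B)))" by (rule II_Suc)
  also have "\<dots> = (\<Sum>c\<in>Cs N k. if c \<in> B then 0 else fact r)"
  proof (rule sum.cong)
    fix c assume c: "c \<in> Cs N k"
    show "II N k r (gmul (xc c) (X B)) = (if c \<in> B then 0 else fact r)"
    proof (cases "c \<in> B")
      case True
      have "gmul (xc c) (X B) = gzero" using X_mul[of "{c}" B] fB True by (auto simp: X_single)
      then show ?thesis using True by simp
    next
      case False
      have "gmul (xc c) (X B) = X (insert c B)" using X_insert[OF fB False] by simp
      moreover have "II N k r (X (insert c B)) = fact r"
        using Suc(1)[of "insert c B"] Suc(2,3) c False fB by simp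
      ultimately show ?thesis using False by simp
    qed
  qed simp
  also have "\<dots> = card (Cs N k - B) * fact r"
    using sum.If_cases[of "Cs N k" "\<lambda>c. c \<in> B" "\<lambda>_. 0" "\<lambda>_. fact r"]
    by (simp add: Diff_eq)
  also have "card (Cs N k - B) = Suc r" using Suc(2,3) fB by (simp add: card_Diff_subset)
  finally show ?case by (simp add: algebra_simps)
qed



definition Tt :: "nat \<times> nat \<Rightarrow> nat \<times> nat \<Rightarrow> gen grass" where
  "Tt c d = gmul (D (fst c) (fst d) (snd c)) (D (fst d) (fst c) (snd d))"

definition dl :: "nat \<times> nat \<Rightarrow> nat \<times> nat \<Rightarrow> real" where
  "dl c d = (if fst c = fst d then 1 else 0) - (if snd c = snd d then 1 else 0)"

definition rect :: "nat \<times> nat \<Rightarrow> nat \<times> nat \<Rightarrow> bool" where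
  "rect c d \<longleftrightarrow> fst c \<noteq> fst d \<and> snd c \<noteq> snd d"

definition GT :: "nat \<times> nat \<Rightarrow> nat \<times> nat \<Rightarrow> gen set" where
  "GT c d = {(False, fst c, snd c), (True, fst d, snd c), (False, fst d, snd d), (True, fst c, snd d)}"

lemma sc_zero_left[simp]: "sc 0 a = gzero" unfolding sc_def by simp

lemma sum4:
  fixes f :: "nat \<Rightarrow> nat \<Rightarrow> nat \<Rightarrow> nat \<Rightarrow> real"
  shows "(\<Sum>x\<in>K \<times> K. \<Sum>t\<in>M. \<Sum>s\<in>M. f (fst x) (snd x) s t) = (\<Sum>c\<in>K \<times> M. \<Sum>d\<in>K \<times> M. f (fst c) (fst d) (snd c) (snd d))"
proof -
  have "(\<Sum>x\<in>K \<times> K. \<Sum>t\<in>M. \<Sum>s\<in>M. f (fst x) (snd x) s t) = (\<Sum>i\<in>K. \<Sum>j\<in>K. \<Sum>t\<in>M. \<Sum>s\<in>M. f i j s t)"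
    by (simp add: sum.cartesian_product')
  also have "\<dots> = (\<Sum>i\<in>K. \<Sum>j\<in>K. \<Sum>s\<in>M. \<Sum>t\<in>M. f i j s t)"
    by (rule sum.cong[OF refl], rule sum.cong[OF refl], rule sum.swap)
  also have "\<dots> = (\<Sum>i\<in>K. \<Sum>s\<in>M. \<Sum>j\<in>K. \<Sum>t\<in>M. f i j s t)"
    by (rule sum.cong[OF refl], rule sum.swap)
  also have "\<dots> = (\<Sum>c\<in>K \<times> M. \<Sum>d\<in>K \<times> M. f (fst c) (fst d) (snd c) (snd d))"
    by (simp add: sum.cartesian_product')
  finally show ?thesis .
qed

lemma trPhi2_eq: "trPhi2 N k = gsum (\<lambda>c. gsum (\<lambda>d. Tt c d) (Cs N k)) (Cs N k)"
proof -
  have "trPhi2 N k = gsum (\<lambda>(i, j). gsum (\<lambda>t. gsum (\<lambda>s. gmul (D i j s) (D j i t)) {1..N-k}) {1..N-k}) ({1..k} \<times> {1..k})"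
    unfolding trPhi2_def Phi_def D_def[symmetric] gmul_gsum_left gmul_gsum_right ..
  also have "\<dots> = gsum (\<lambda>c. gsum (\<lambda>d. Tt c d) (Cs N k)) (Cs N k)"
    unfolding gsum_def Tt_def Cs_def
    by (rule ext) (simp only: case_prod_beta, rule sum4)
  finally show ?thesis .
qed

lemma hs_D2: "hs (D i j s) {(False, i, s), (True, j, s)}" by (rule hs_D)

lemma card_D2[simp]: "card {(False, i, s), (True, j, s)} = 2" by simp

lemma D_comm: "gmul (D i j s) (D i' j' s') = gmul (D i' j' s') (D i j s)"
  using gmul_comm[OF hs_D[of i j s] hs_D[of i' j' s']] by simp

lemma Tt_diag: "Tt c c = gzero"
  unfolding Tt_def by (rule hs_gmul_zero[OF hs_D hs_D]) auto

lemma xc_D: "xc (i, s) = D i i s" unfolding xc_def by simp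

lemma Tt_row: "fst c = fst d \<Longrightarrow> c \<noteq> d \<Longrightarrow> Tt c d = X {c, d}"
proof -
  assume h: "fst c = fst d" "c \<noteq> d"
  have "Tt c d = gmul (xc c) (xc d)" unfolding Tt_def xc_def using h by simp
  also have "\<dots> = gmul (X {c}) (X {d})" by (simp add: X_single)
  also have "\<dots> = X {c, d}" using X_mul[of "{c}" "{d}"] h by (auto simp: insert_commute)
  finally show ?thesis .
qed

lemma anti_gen: "g \<noteq> h \<Longrightarrow> gmul (ggen g) (ggen h) = sc (-1) (gmul (ggen h) (ggen g))"
  using gmul_comm[OF hs_ggen hs_ggen, of g h] by simp

lemma Tt_col: "snd c = snd d \<Longrightarrow> fst c \<noteq> fst d \<Longrightarrow> Tt c d = sc (-1) (X {c, d})"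
proof -
  assume h: "snd c = snd d" "fst c \<noteq> fst d"
  obtain i s j where c: "c = (i, s)" and d: "d = (j, s)" using h by (cases c, cases d) auto
  have ij: "i \<noteq> j" using h c d by simp
  define a where "a = psi i s"
  define ab where "ab = psibar i s"
  define b where "b = psi j s"
  define bb where "bb = psibar j s"
  have "Tt c d = gmul (gmul a bb) (gmul b ab)" unfolding Tt_def c d D_def a_def ab_def b_def bb_def by simp
  also have "\<dots> = gmul a (gmul (gmul bb b) ab)" by (simp add: gmul_assoc)
  also have "gmul bb b = sc (-1) (gmul b bb)" unfolding bb_def b_def psi_def psibar_def by (rule anti_gen) simp
  also have "gmul a (gmul (sc (-1) (gmul b bb)) ab) = sc (-1) (gmul a (gmul (gmul b bb) ab))"
    by (simp add: gmul_sc_left gmul_sc_right)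
  also have "gmul (gmul b bb) ab = gmul ab (gmul b bb)"
  proof -
    have "hs (gmul b bb) {(False, j, s), (True, j, s)}"
      using hs_gmul_hs[OF hs_psi hs_psibar, of j s j s] unfolding b_def bb_def by (simp add: insert_commute)
    from gmul_comm[OF this hs_psibar[of i s]] show ?thesis unfolding ab_def by simp
  qed
  also have "gmul a (gmul ab (gmul b bb)) = gmul (gmul a ab) (gmul b bb)" by (simp add: gmul_assoc)
  also have "gmul a ab = xc c" unfolding a_def ab_def c xc_def D_def by simp
  also have "gmul b bb = xc d" unfolding b_def bb_def d xc_def D_def by simp
  also have "gmul (xc c) (xc d) = X {c, d}"
  proof -
    have "{c} \<inter> {d} = {}" "{c} \<union> {d} = {c, d}" using h by auto
    then show ?thesis using X_mul[of "{c}" "{d}"] by (simp add: X_single)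
  qed
  finally show ?thesis .
qed

lemma dl_sym: "dl c d = dl d c" unfolding dl_def by auto
lemma dl_diag[simp]: "dl c c = 0" unfolding dl_def by simp

lemma Tt_nonrect: "\<not> rect c d \<Longrightarrow> Tt c d = sc (dl c d) (X {c, d})"
proof -
  assume nr: "\<not> rect c d"
  consider "c = d" | "c \<noteq> d" "fst c = fst d" | "c \<noteq> d" "fst c \<noteq> fst d" "snd c = snd d"
    using nr unfolding rect_def by blast
  then show ?thesis
  proof cases
    case 1 then show ?thesis by (simp add: Tt_diag)
  next
    case 2
    then have "snd c \<noteq> snd d" by (auto simp: prod_eq_iff)
    then show ?thesis using 2 by (simp add: Tt_row dl_def)
  next
    case 3 then show ?thesis by (simp add: Tt_col dl_def)
  qed
qed

lemma GT_eq: "GT c d = {(False, fst c, snd c), (True, fst d, snd c)} \<union> {(False, fst d, snd d), (True, fst c, snd d)}"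
  unfolding GT_def by auto

lemma finite_GT[simp]: "finite (GT c d)" unfolding GT_def by simp

lemma hs_Tt: "hs (Tt c d) (GT c d)"
  unfolding Tt_def GT_eq by (rule hs_gmul_hs[OF hs_D hs_D]) simp_all

lemma unbal_GT: "rect c d \<Longrightarrow> \<not> balanced (GT c d)"
  unfolding rect_def balanced_def GT_def
  by (cases c, cases d) (auto intro!: exI[of _ c])

lemma II_prod_unbal:
  assumes "hs a G" "hs b H" "finite G" "finite H" "G \<inter> H = {} \<Longrightarrow> \<not> balanced (G \<union> H)"
  shows "II N k r (gmul a b) = 0"
proof (cases "G \<inter> H = {}")
  case True
  show ?thesis by (rule II_unbal[OF hs_gmul_hs[OF assms(1-4)]]) (use assms True in simp_all)
next
  case False
  then show ?thesis using hs_gmul_zero[OF assms(1-4)] by simp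
qed

lemma hs_Xc: "hs (sc e (X {c, d})) (UNIV \<times> {c, d})"
  by (rule hs_sc, rule hs_X) simp

lemma bal_cells: "balanced (UNIV \<times> A)" unfolding balanced_def by auto

lemma II_Tt:
  assumes "c \<in> Cs N k" "d \<in> Cs N k" "card (Cs N k) = r + 2"
  shows "II N k r (Tt c d) = dl c d * fact r"
proof (cases "rect c d")
  case True
  then have "dl c d = 0" unfolding rect_def dl_def by simp
  then show ?thesis using II_unbal[OF hs_Tt finite_GT unbal_GT[OF True]] by simp
next
  case False
  show ?thesis
  proof (cases "c = d")
    case True then show ?thesis by (simp add: Tt_diag)
  next
    case cd: False
    have "II N k r (X {c, d}) = fact r" by (rule II_X) (use assms cd in auto)
    then show ?thesis using Tt_nonrect[OF False] by (simp add: II_sc)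
  qed
qed

lemma sum_ind: "finite A \<Longrightarrow> (\<Sum>x\<in>A. if Q x then 1 else 0 :: real) = real (card {x\<in>A. Q x})"
  by (simp add: sum.inter_filter[symmetric])

lemma sum_ind_fst: "finite (K :: 'a set) \<Longrightarrow> finite (M :: 'b set) \<Longrightarrow> a \<in> K \<Longrightarrow>
  (\<Sum>d\<in>K \<times> M. if a = fst d then 1 else 0 :: real) = real (card M)"
proof -
  assume f: "finite K" "finite M" "a \<in> K"
  have "{d \<in> K \<times> M. a = fst d} = {a} \<times> M" using f by auto
  then show ?thesis using f by (simp add: sum_ind card_cartesian_product)
qed

lemma sum_ind_snd: "finite (K :: 'a set) \<Longrightarrow> finite (M :: 'b set) \<Longrightarrow> b \<in> M \<Longrightarrow>
  (\<Sum>d\<in>K \<times> M. if b = snd d then 1 else 0 :: real) = real (card K)"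
proof -
  assume f: "finite K" "finite M" "b \<in> M"
  have "{d \<in> K \<times> M. b = snd d} = K \<times> {b}" using f by auto
  then show ?thesis using f by (simp add: sum_ind card_cartesian_product)
qed

lemma sum_ind_both: "finite (K :: 'a set) \<Longrightarrow> finite (M :: 'b set) \<Longrightarrow> c \<in> K \<times> M \<Longrightarrow>
  (\<Sum>d\<in>K \<times> M. if c = d then 1 else 0 :: real) = 1"
  by simp

lemma sum_dl: "c \<in> Cs N k \<Longrightarrow> (\<Sum>d\<in>Cs N k. dl c d) = real (N - k) - real k"
proof -
  assume c: "c \<in> Cs N k"
  have "(\<Sum>d\<in>Cs N k. dl c d) = (\<Sum>d\<in>Cs N k. if fst c = fst d then 1 else 0) - (\<Sum>d\<in>Cs N k. if snd c = snd d then 1 else 0)"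
    unfolding dl_def by (simp add: sum_subtractf)
  also have "\<dots> = real (N - k) - real k"
    using c unfolding Cs_def by (simp add: sum_ind_fst sum_ind_snd mem_Times_iff)
  finally show ?thesis .
qed

lemma sum_dl2: "c \<in> Cs N k \<Longrightarrow> (\<Sum>d\<in>Cs N k. dl d c) = real (N - k) - real k"
  using sum_dl[of c N k] by (simp add: dl_sym)

lemma card_Cs: "card (Cs N k) = k * (N - k)" unfolding Cs_def by (simp add: card_cartesian_product)

lemma nk_eq: "(k::nat) * N - k\<^sup>2 = k * (N - k)"
proof -
  have "k * (N - k) = k * N - k * k" by (simp add: right_diff_distrib')
  then show ?thesis by (simp add: power2_eq_square)
qed

lemma fsup_trPhi2: "fsup (trPhi2 N k)"
  unfolding trPhi2_eq Tt_def by (intro fsup_gsum fsup_gmul)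

lemma II_trPhi2: "card (Cs N k) = r + 2 \<Longrightarrow> II N k r (trPhi2 N k) = fact r * real (card (Cs N k)) * (real (N - k) - real k)"
proof -
  assume h: "card (Cs N k) = r + 2"
  have "II N k r (trPhi2 N k) = (\<Sum>c\<in>Cs N k. \<Sum>d\<in>Cs N k. II N k r (Tt c d))"
    unfolding trPhi2_eq by (simp add: II_gsum)
  also have "\<dots> = (\<Sum>c\<in>Cs N k. \<Sum>d\<in>Cs N k. dl c d * fact r)"
    by (intro sum.cong refl II_Tt h)
  also have "\<dots> = (\<Sum>c\<in>Cs N k. fact r * (real (N - k) - real k))"
  proof (rule sum.cong[OF refl])
    fix c assume c: "c \<in> Cs N k"
    have "(\<Sum>d\<in>Cs N k. dl c d * fact r) = (\<Sum>d\<in>Cs N k. dl c d) * fact r"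
      by (rule sum_distrib_right[symmetric])
    then show "(\<Sum>d\<in>Cs N k. dl c d * fact r) = fact r * (real (N - k) - real k)"
      using sum_dl[OF c] by simp
  qed
  also have "\<dots> = real (card (Cs N k)) * (fact r * (real (N - k) - real k))"
    by (rule sum_constant)
  finally show ?thesis by (simp only: mult_ac)
qed

lemma P1:
  assumes "1 \<le> k" "k \<le> N" "k * N - k\<^sup>2 \<ge> 2"
  shows "P N k 1 = fact (k * N - k\<^sup>2 - 2) * real k * (real N - real k) * (real N - 2 * real k)"
proof -
  define r where "r = k * N - k\<^sup>2 - 2"
  have cr: "card (Cs N k) = r + 2" using assms unfolding r_def card_Cs nk_eq by simp
  have "P N k 1 = II N k r (gpow (trPhi2 N k) 1)" unfolding P_def II_def r_def by simp
  also have "gpow (trPhi2 N k) 1 = trPhi2 N k" by (simp add: gone_right fsup_trPhi2)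
  also have "II N k r (trPhi2 N k) = fact r * real (card (Cs N k)) * (real (N - k) - real k)"
    by (rule II_trPhi2[OF cr])
  also have "\<dots> = fact r * real k * (real N - real k) * (real N - 2 * real k)"
  proof -
    have e: "real (N - k) = real N - real k" using assms(2) by (rule of_nat_diff)
    have cc: "real (card (Cs N k)) = real k * (real N - real k)" unfolding card_Cs of_nat_mult e ..
    show ?thesis unfolding cc e by (simp add: algebra_simps)
  qed
  finally show ?thesis unfolding r_def .
qed



definition sw1 :: "nat \<times> nat \<Rightarrow> nat \<times> nat \<Rightarrow> (nat \<times> nat) \<times> (nat \<times> nat)" where
  "sw1 c d = ((fst d, snd c), (fst c, snd d))"
definition sw2 :: "nat \<times> nat \<Rightarrow> nat \<times> nat \<Rightarrow> (nat \<times> nat) \<times> (nat \<times> nat)" where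
  "sw2 c d = ((fst c, snd d), (fst d, snd c))"

lemma rearr: "gmul b c = gmul c b \<Longrightarrow> gmul (gmul a b) (gmul c d) = gmul (gmul a c) (gmul b d)"
proof -
  assume h: "gmul b c = gmul c b"
  have "gmul (gmul a b) (gmul c d) = gmul a (gmul (gmul b c) d)" by (simp add: gmul_assoc)
  also have "\<dots> = gmul a (gmul (gmul c b) d)" using h by simp
  finally show ?thesis by (simp add: gmul_assoc)
qed

lemma Tt_sw1:
  assumes "rect c d"
  shows "gmul (Tt c d) (Tt (fst d, snd c) (fst c, snd d)) = X {c, d, (fst d, snd c), (fst c, snd d)}"
proof -
  obtain i s j t where c: "c = (i, s)" and d: "d = (j, t)" by (cases c, cases d) auto
  have ij: "i \<noteq> j" "s \<noteq> t" using assms c d unfolding rect_def by auto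
  have "gmul (Tt c d) (Tt (fst d, snd c) (fst c, snd d)) = gmul (gmul (D i j s) (D j i t)) (gmul (D j i s) (D i j t))"
    unfolding Tt_def c d by simp
  also have "\<dots> = gmul (gmul (D i j s) (D j i s)) (gmul (D j i t) (D i j t))"
    by (rule rearr) (rule D_comm)
  also have "gmul (D i j s) (D j i s) = sc (-1) (X {(i, s), (j, s)})"
    using Tt_col[of "(i, s)" "(j, s)"] ij unfolding Tt_def by simp
  also have "gmul (D j i t) (D i j t) = sc (-1) (X {(j, t), (i, t)})"
    using Tt_col[of "(j, t)" "(i, t)"] ij unfolding Tt_def by simp
  also have "gmul (sc (-1) (X {(i, s), (j, s)})) (sc (-1) (X {(j, t), (i, t)})) = X ({(i, s), (j, s)} \<union> {(j, t), (i, t)})"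
    using X_mul[of "{(i, s), (j, s)}" "{(j, t), (i, t)}"] ij by (simp add: gmul_sc_left gmul_sc_right)
  also have "{(i, s), (j, s)} \<union> {(j, t), (i, t)} = {c, d, (fst d, snd c), (fst c, snd d)}"
    unfolding c d by auto
  finally show ?thesis .
qed

lemma Tt_sw2:
  assumes "rect c d"
  shows "gmul (Tt c d) (Tt (fst c, snd d) (fst d, snd c)) = X {c, d, (fst d, snd c), (fst c, snd d)}"
proof -
  obtain i s j t where c: "c = (i, s)" and d: "d = (j, t)" by (cases c, cases d) auto
  have "Tt (fst c, snd d) (fst d, snd c) = Tt (fst d, snd c) (fst c, snd d)"
    unfolding Tt_def c d using D_comm by simp
  then show ?thesis using Tt_sw1[OF assms] by simp
qed

lemma card4: "rect c d \<Longrightarrow> card {c, d, (fst d, snd c), (fst c, snd d)} = 4"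
  by (cases c, cases d) (auto simp: rect_def)

lemma II_TT:
  assumes cs: "c1 \<in> Cs N k" "c2 \<in> Cs N k" "c3 \<in> Cs N k" "c4 \<in> Cs N k" and cr: "card (Cs N k) = r + 4"
  shows "II N k r (gmul (Tt c1 c2) (Tt c3 c4)) = fact r *
    (dl c1 c2 * dl c3 c4 * (if c3 \<notin> {c1, c2} \<and> c4 \<notin> {c1, c2} then 1 else 0)
     + (if rect c1 c2 \<and> ((c3, c4) = sw1 c1 c2 \<or> (c3, c4) = sw2 c1 c2) then 1 else 0))"
proof (cases "rect c1 c2")
  case r12: True
  have d12: "dl c1 c2 = 0" using r12 unfolding rect_def dl_def by simp
  show ?thesis
  proof (cases "rect c3 c4")
    case r34: True
    show ?thesis
    proof (cases "(c3, c4) = sw1 c1 c2")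
      case True
      then have e: "c3 = (fst c2, snd c1)" "c4 = (fst c1, snd c2)" unfolding sw1_def by auto
      have "II N k r (gmul (Tt c1 c2) (Tt c3 c4)) = fact r"
        unfolding e Tt_sw1[OF r12] by (rule II_X) (use cs e card4[OF r12] cr in auto)
      then show ?thesis using d12 r12 True by simp
    next
      case n1: False
      show ?thesis
      proof (cases "(c3, c4) = sw2 c1 c2")
        case True
        then have e: "c3 = (fst c1, snd c2)" "c4 = (fst c2, snd c1)" unfolding sw2_def by auto
        have "II N k r (gmul (Tt c1 c2) (Tt c3 c4)) = fact r"
          unfolding e Tt_sw2[OF r12] by (rule II_X) (use cs e card4[OF r12] cr in auto)
        then show ?thesis using d12 r12 True by simp
      next
        case n2: False
        have "II N k r (gmul (Tt c1 c2) (Tt c3 c4)) = 0"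
        proof (rule II_prod_unbal[OF hs_Tt hs_Tt finite_GT finite_GT])
          assume disj: "GT c1 c2 \<inter> GT c3 c4 = {}"
          show "\<not> balanced (GT c1 c2 \<union> GT c3 c4)"
          proof
            assume b: "balanced (GT c1 c2 \<union> GT c3 c4)"
            obtain i s j t where c1: "c1 = (i, s)" and c2: "c2 = (j, t)" by (cases c1, cases c2) auto
            obtain i' s' j' t' where c3: "c3 = (i', s')" and c4: "c4 = (j', t')" by (cases c3, cases c4) auto
            have bb: "(False, c) \<in> GT c1 c2 \<union> GT c3 c4 \<longleftrightarrow> (True, c) \<in> GT c1 c2 \<union> GT c3 c4" for c
              using b unfolding balanced_def by blast
            have b1: "(True, i, s) \<in> GT c1 c2 \<union> GT c3 c4" using bb[of "(i, s)"] by (simp add: GT_def c1 c2)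
            have b2: "(True, j, t) \<in> GT c1 c2 \<union> GT c3 c4" using bb[of "(j, t)"] by (simp add: GT_def c1 c2)
            have t1: "(i, s) = (j', s') \<or> (i, s) = (i', t')"
              using b1 r12 unfolding c1 c2 c3 c4 GT_def rect_def by auto
            have t2: "(j, t) = (j', s') \<or> (j, t) = (i', t')"
              using b2 r12 unfolding c1 c2 c3 c4 GT_def rect_def by auto
            show False using t1 t2 r12 n1 n2 unfolding c1 c2 c3 c4 rect_def sw1_def sw2_def by auto
          qed
        qed
        then show ?thesis using d12 n1 n2 by simp
      qed
    qed
  next
    case r34: False
    have "II N k r (gmul (Tt c1 c2) (Tt c3 c4)) = 0"
      unfolding Tt_nonrect[OF r34]
    proof (rule II_prod_unbal[OF hs_Tt hs_Xc finite_GT])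
      show "finite ((UNIV :: bool set) \<times> {c3, c4})" by simp
      assume disj: "GT c1 c2 \<inter> (UNIV \<times> {c3, c4}) = {}"
      show "\<not> balanced (GT c1 c2 \<union> (UNIV \<times> {c3, c4}))"
        using disj r12 unfolding balanced_def GT_def rect_def
        by (cases c1, cases c2) (auto intro!: exI[of _ c1])
    qed
    moreover have "\<not> ((c3, c4) = sw1 c1 c2 \<or> (c3, c4) = sw2 c1 c2)"
      using r12 r34 unfolding sw1_def sw2_def rect_def by auto
    ultimately show ?thesis using d12 by simp
  qed
next
  case r12: False
  show ?thesis
  proof (cases "rect c3 c4")
    case r34: True
    have d34: "dl c3 c4 = 0" using r34 unfolding rect_def dl_def by simp
    have "II N k r (gmul (Tt c1 c2) (Tt c3 c4)) = 0"
      unfolding Tt_nonrect[OF r12]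
    proof (rule II_prod_unbal[OF hs_Xc hs_Tt _ finite_GT])
      show "finite ((UNIV :: bool set) \<times> {c1, c2})" by simp
      assume disj: "(UNIV \<times> {c1, c2}) \<inter> GT c3 c4 = {}"
      show "\<not> balanced ((UNIV \<times> {c1, c2}) \<union> GT c3 c4)"
        using disj r34 unfolding balanced_def GT_def rect_def
        by (cases c3, cases c4) (auto intro!: exI[of _ c3])
    qed
    then show ?thesis using d34 r12 by simp
  next
    case r34: False
    have "gmul (Tt c1 c2) (Tt c3 c4) = sc (dl c1 c2 * dl c3 c4) (gmul (X {c1, c2}) (X {c3, c4}))"
      unfolding Tt_nonrect[OF r12] Tt_nonrect[OF r34] by (simp add: gmul_sc_left gmul_sc_right mult.commute)
    also have "\<dots> = sc (dl c1 c2 * dl c3 c4) (if {c1, c2} \<inter> {c3, c4} = {} then X ({c1, c2} \<union> {c3, c4}) else gzero)"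
      by (simp add: X_mul)
    finally have e: "gmul (Tt c1 c2) (Tt c3 c4) = \<dots>" .
    show ?thesis
    proof (cases "dl c1 c2 * dl c3 c4 = 0")
      case True
      have "gmul (Tt c1 c2) (Tt c3 c4) = gzero" using e unfolding True by simp
      then show ?thesis using r12 unfolding True by simp
    next
      case False
      then have ne: "c1 \<noteq> c2" "c3 \<noteq> c4" by auto
      show ?thesis
      proof (cases "{c1, c2} \<inter> {c3, c4} = {}")
        case True
        have "II N k r (X ({c1, c2} \<union> {c3, c4})) = fact r"
          by (rule II_X) (use cs cr ne True in auto)
        then show ?thesis using e True r12 by (simp add: II_sc)
      next
        case dj: False
        have g: "gmul (Tt c1 c2) (Tt c3 c4) = gzero" unfolding e if_not_P[OF dj] by simp
        have i: "(if c3 \<notin> {c1, c2} \<and> c4 \<notin> {c1, c2} then 1 else 0) = (0::real)" using dj by auto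
        show ?thesis unfolding g i using r12 by simp
      qed
    qed
  qed
qed

lemma sum_if_notin: "finite C \<Longrightarrow> (\<Sum>x\<in>C. if x \<notin> S then f x else 0) = (\<Sum>x\<in>C - S. f x)"
proof -
  assume f: "finite C"
  have "(\<Sum>x\<in>C - S. f x) = (\<Sum>x\<in>{x\<in>C. x \<notin> S}. f x)" by (rule sum.cong) auto
  also have "\<dots> = (\<Sum>x\<in>C. if x \<notin> S then f x else 0)" using f by (rule sum.inter_filter)
  finally show ?thesis by simp
qed

lemma sum_rm2: "finite C \<Longrightarrow> a \<in> C \<Longrightarrow> b \<in> C \<Longrightarrow> a \<noteq> b \<Longrightarrow>
  (\<Sum>x\<in>C - {a, b}. f x) = (\<Sum>x\<in>C. f x) - f a - (f b :: real)"
proof -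
  assume h: "finite C" "a \<in> C" "b \<in> C" "a \<noteq> b"
  have "(\<Sum>x\<in>C. f x) = f a + (\<Sum>x\<in>C - {a}. f x)" using h by (simp add: sum.remove)
  also have "(\<Sum>x\<in>C - {a}. f x) = f b + (\<Sum>x\<in>C - {a} - {b}. f x)" using h by (simp add: sum.remove)
  also have "C - {a} - {b} = C - {a, b}" by auto
  finally show ?thesis by simp
qed

lemma S1:
  assumes c: "c1 \<in> Cs N k" "c2 \<in> Cs N k"
  shows "(\<Sum>c3\<in>Cs N k. \<Sum>c4\<in>Cs N k. dl c1 c2 * dl c3 c4 * (if c3 \<notin> {c1, c2} \<and> c4 \<notin> {c1, c2} then 1 else 0))
    = dl c1 c2 * ((real (card (Cs N k)) - 4) * (real (N - k) - real k) + 2 * dl c1 c2)"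
proof (cases "c1 = c2")
  case True then show ?thesis by simp
next
  case ne: False
  let ?C = "Cs N k"
  let ?e = "real (N - k) - real k"
  have "(\<Sum>c3\<in>?C. \<Sum>c4\<in>?C. dl c1 c2 * dl c3 c4 * (if c3 \<notin> {c1, c2} \<and> c4 \<notin> {c1, c2} then 1 else 0))
      = dl c1 c2 * (\<Sum>c3\<in>?C. if c3 \<notin> {c1, c2} then (\<Sum>c4\<in>?C. if c4 \<notin> {c1, c2} then dl c3 c4 else 0) else 0)"
  proof -
    have "(\<Sum>c4\<in>?C. dl c1 c2 * dl c3 c4 * (if c3 \<notin> {c1, c2} \<and> c4 \<notin> {c1, c2} then 1 else 0))
      = dl c1 c2 * (if c3 \<notin> {c1, c2} then (\<Sum>c4\<in>?C. if c4 \<notin> {c1, c2} then dl c3 c4 else 0) else 0)" for c3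
      by (cases "c3 \<notin> {c1, c2}") (auto simp: sum_distrib_left intro!: sum.cong)
    then show ?thesis by (simp add: sum_distrib_left)
  qed
  also have "(\<Sum>c3\<in>?C. if c3 \<notin> {c1, c2} then (\<Sum>c4\<in>?C. if c4 \<notin> {c1, c2} then dl c3 c4 else 0) else 0)
      = (\<Sum>c3\<in>?C - {c1, c2}. \<Sum>c4\<in>?C - {c1, c2}. dl c3 c4)"
    by (simp only: sum_if_notin[OF finite_Cs])
  also have "\<dots> = (\<Sum>c3\<in>?C - {c1, c2}. ?e - dl c3 c1 - dl c3 c2)"
  proof (rule sum.cong[OF refl])
    fix c3 assume "c3 \<in> ?C - {c1, c2}"
    then have "c3 \<in> ?C" by simp
    then show "(\<Sum>c4\<in>?C - {c1, c2}. dl c3 c4) = ?e - dl c3 c1 - dl c3 c2"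
      using sum_rm2[of ?C c1 c2 "dl c3"] c ne sum_dl by simp
  qed
  also have "\<dots> = (\<Sum>c3\<in>?C. ?e - dl c3 c1 - dl c3 c2) - (?e - dl c1 c1 - dl c1 c2) - (?e - dl c2 c1 - dl c2 c2)"
    by (rule sum_rm2) (use c ne in auto)
  also have "(\<Sum>c3\<in>?C. ?e - dl c3 c1 - dl c3 c2) = real (card ?C) * ?e - ?e - ?e"
    using sum_dl2[OF c(1)] sum_dl2[OF c(2)] by (simp add: sum_subtractf)
  finally show ?thesis by (simp add: dl_sym[of c2 c1] algebra_simps)
qed

lemma S2:
  assumes c: "c1 \<in> Cs N k" "c2 \<in> Cs N k"
  shows "(\<Sum>c3\<in>Cs N k. \<Sum>c4\<in>Cs N k. (if rect c1 c2 \<and> ((c3, c4) = sw1 c1 c2 \<or> (c3, c4) = sw2 c1 c2) then 1 else 0 :: real))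
    = (if rect c1 c2 then 2 else 0)"
proof -
  let ?C = "Cs N k"
  have "(\<Sum>c3\<in>?C. \<Sum>c4\<in>?C. (if rect c1 c2 \<and> ((c3, c4) = sw1 c1 c2 \<or> (c3, c4) = sw2 c1 c2) then 1 else 0 :: real))
    = (\<Sum>q\<in>?C \<times> ?C. if rect c1 c2 \<and> (q = sw1 c1 c2 \<or> q = sw2 c1 c2) then 1 else 0)"
    by (simp add: sum.cartesian_product')
  also have "\<dots> = real (card {q \<in> ?C \<times> ?C. rect c1 c2 \<and> (q = sw1 c1 c2 \<or> q = sw2 c1 c2)})"
    by (rule sum_ind) simp
  also have "{q \<in> ?C \<times> ?C. rect c1 c2 \<and> (q = sw1 c1 c2 \<or> q = sw2 c1 c2)} = (if rect c1 c2 then {sw1 c1 c2, sw2 c1 c2} else {})"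
    using c unfolding Cs_def sw1_def sw2_def by auto
  also have "card {sw1 c1 c2, sw2 c1 c2} = 2" if "rect c1 c2"
    using that unfolding sw1_def sw2_def rect_def by (auto simp: prod_eq_iff)
  ultimately show ?thesis by auto
qed

lemma sum_dlsq: "c \<in> Cs N k \<Longrightarrow> (\<Sum>d\<in>Cs N k. dl c d * dl c d) = real (N - k) + real k - 2"
proof -
  assume c: "c \<in> Cs N k"
  have e: "dl c d * dl c d = (if fst c = fst d then 1 else 0) + (if snd c = snd d then 1 else 0) - 2 * (if c = d then 1 else 0)" for d
    unfolding dl_def by (auto simp: prod_eq_iff)
  show ?thesis unfolding e using c unfolding Cs_def
    by (simp add: sum_subtractf sum.distrib sum_ind_fst sum_ind_snd mem_Times_iff sum_distrib_left[symmetric])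
qed

lemma sum_rect: "c \<in> Cs N k \<Longrightarrow> (\<Sum>d\<in>Cs N k. if rect c d then 1 else 0 :: real) = (real k - 1) * (real (N - k) - 1)"
proof -
  assume c: "c \<in> Cs N k"
  have e: "(if rect c d then 1 else 0 :: real) = 1 - (if fst c = fst d then 1 else 0) - (if snd c = snd d then 1 else 0) + (if c = d then 1 else 0)" for d
    unfolding rect_def by (auto simp: prod_eq_iff)
  have "(\<Sum>d\<in>Cs N k. if rect c d then 1 else 0 :: real) = real (card (Cs N k)) - real (N - k) - real k + 1"
    unfolding e using c unfolding Cs_def
    by (simp add: sum_subtractf sum.distrib sum_ind_fst sum_ind_snd mem_Times_iff)
  then show ?thesis unfolding card_Cs of_nat_mult by (simp add: algebra_simps del: of_nat_diff)
qed

lemma inner_c1: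
  assumes c1: "c1 \<in> Cs N k"
  shows "(\<Sum>c2\<in>Cs N k. dl c1 c2 * ((real (card (Cs N k)) - 4) * (real (N - k) - real k) + 2 * dl c1 c2) + (if rect c1 c2 then 2 else 0))
    = (real (card (Cs N k)) - 4) * (real (N - k) - real k) * (real (N - k) - real k)
      + 2 * (real (N - k) + real k - 2) + 2 * ((real k - 1) * (real (N - k) - 1))"
proof -
  let ?a = "(real (card (Cs N k)) - 4) * (real (N - k) - real k)"
  have e: "dl c1 c2 * (?a + 2 * dl c1 c2) + (if rect c1 c2 then 2 else 0)
      = ?a * dl c1 c2 + 2 * (dl c1 c2 * dl c1 c2) + 2 * (if rect c1 c2 then 1 else 0)" for c2
    by (simp add: algebra_simps)
  show ?thesis unfolding e
    by (simp add: sum.distrib sum_distrib_left[symmetric] sum_dl[OF c1] sum_dlsq[OF c1] sum_rect[OF c1])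
qed

lemma swap22:
  fixes f :: "'a \<Rightarrow> 'a \<Rightarrow> 'a \<Rightarrow> 'a \<Rightarrow> real"
  shows "(\<Sum>a\<in>A. \<Sum>b\<in>A. \<Sum>c\<in>A. \<Sum>d\<in>A. f a b c d) = (\<Sum>c\<in>A. \<Sum>d\<in>A. \<Sum>a\<in>A. \<Sum>b\<in>A. f a b c d)"
proof -
  have "(\<Sum>a\<in>A. \<Sum>b\<in>A. \<Sum>c\<in>A. \<Sum>d\<in>A. f a b c d) = (\<Sum>a\<in>A. \<Sum>c\<in>A. \<Sum>b\<in>A. \<Sum>d\<in>A. f a b c d)"
    by (rule sum.cong[OF refl], rule sum.swap)
  also have "\<dots> = (\<Sum>c\<in>A. \<Sum>a\<in>A. \<Sum>b\<in>A. \<Sum>d\<in>A. f a b c d)" by (rule sum.swap)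
  also have "\<dots> = (\<Sum>c\<in>A. \<Sum>a\<in>A. \<Sum>d\<in>A. \<Sum>b\<in>A. f a b c d)"
    by (rule sum.cong[OF refl], rule sum.cong[OF refl], rule sum.swap)
  also have "\<dots> = (\<Sum>c\<in>A. \<Sum>d\<in>A. \<Sum>a\<in>A. \<Sum>b\<in>A. f a b c d)"
    by (rule sum.cong[OF refl], rule sum.swap)
  finally show ?thesis .
qed

lemma P2:
  assumes "1 \<le> k" "k \<le> N" "k * N - k\<^sup>2 \<ge> 4"
  shows "P N k 2 = fact (k * N - k\<^sup>2 - 4) * real k * (real N - real k) *
             (real k * (real N - real k) ^ 3 - 2 * (real N - real k)\<^sup>2 * ((real k)\<^sup>2 + 2)
              + (real N - real k) * ((real k) ^ 3 + 10 * real k) - 4 * (real k)\<^sup>2 - 2)"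
proof -
  define r where "r = k * N - k\<^sup>2 - 4"
  let ?C = "Cs N k"
  have cr: "card ?C = r + 4" using assms unfolding r_def card_Cs nk_eq by simp
  have "P N k 2 = II N k r (gpow (trPhi2 N k) 2)" unfolding P_def II_def r_def by simp
  also have "gpow (trPhi2 N k) 2 = gmul (trPhi2 N k) (trPhi2 N k)"
    by (simp add: numeral_2_eq_2 gone_right fsup_trPhi2)
  also have "II N k r (gmul (trPhi2 N k) (trPhi2 N k)) =
      (\<Sum>c1\<in>?C. \<Sum>c2\<in>?C. \<Sum>c3\<in>?C. \<Sum>c4\<in>?C. II N k r (gmul (Tt c1 c2) (Tt c3 c4)))"
    unfolding trPhi2_eq gmul_gsum_left gmul_gsum_right by (simp add: II_gsum, rule swap22)
  also have "\<dots> = (\<Sum>c1\<in>?C. \<Sum>c2\<in>?C. \<Sum>c3\<in>?C. \<Sum>c4\<in>?C. fact r *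
    (dl c1 c2 * dl c3 c4 * (if c3 \<notin> {c1, c2} \<and> c4 \<notin> {c1, c2} then 1 else 0)
     + (if rect c1 c2 \<and> ((c3, c4) = sw1 c1 c2 \<or> (c3, c4) = sw2 c1 c2) then 1 else 0)))"
    by (intro sum.cong refl II_TT cr)
  also have "\<dots> = fact r * (\<Sum>c1\<in>?C. \<Sum>c2\<in>?C.
      dl c1 c2 * ((real (card ?C) - 4) * (real (N - k) - real k) + 2 * dl c1 c2) + (if rect c1 c2 then 2 else 0))"
  proof -
    have "(\<Sum>c3\<in>?C. \<Sum>c4\<in>?C. fact r *
      (dl c1 c2 * dl c3 c4 * (if c3 \<notin> {c1, c2} \<and> c4 \<notin> {c1, c2} then 1 else 0)
       + (if rect c1 c2 \<and> ((c3, c4) = sw1 c1 c2 \<or> (c3, c4) = sw2 c1 c2) then 1 else 0)))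
      = fact r * (dl c1 c2 * ((real (card ?C) - 4) * (real (N - k) - real k) + 2 * dl c1 c2) + (if rect c1 c2 then 2 else 0))"
      if c: "c1 \<in> ?C" "c2 \<in> ?C" for c1 c2
    proof -
      have "(\<Sum>c3\<in>?C. \<Sum>c4\<in>?C. fact r *
        (dl c1 c2 * dl c3 c4 * (if c3 \<notin> {c1, c2} \<and> c4 \<notin> {c1, c2} then 1 else 0)
         + (if rect c1 c2 \<and> ((c3, c4) = sw1 c1 c2 \<or> (c3, c4) = sw2 c1 c2) then 1 else 0)))
        = fact r * ((\<Sum>c3\<in>?C. \<Sum>c4\<in>?C. dl c1 c2 * dl c3 c4 * (if c3 \<notin> {c1, c2} \<and> c4 \<notin> {c1, c2} then 1 else 0))
          + (\<Sum>c3\<in>?C. \<Sum>c4\<in>?C. (if rect c1 c2 \<and> ((c3, c4) = sw1 c1 c2 \<or> (c3, c4) = sw2 c1 c2) then 1 else 0)))"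
        by (simp only: sum_distrib_left[symmetric] sum.distrib)
      also have "\<dots> = fact r * (dl c1 c2 * ((real (card ?C) - 4) * (real (N - k) - real k) + 2 * dl c1 c2) + (if rect c1 c2 then 2 else 0))"
        by (simp only: S1[OF c] S2[OF c])
      finally show ?thesis .
    qed
    then show ?thesis by (simp add: sum_distrib_left)
  qed
  also have "\<dots> = fact r * (real (card ?C) * ((real (card ?C) - 4) * (real (N - k) - real k) * (real (N - k) - real k)
      + 2 * (real (N - k) + real k - 2) + 2 * ((real k - 1) * (real (N - k) - 1))))"
    by (simp add: inner_c1)
  also have "\<dots> = fact r * real k * (real N - real k) *
             (real k * (real N - real k) ^ 3 - 2 * (real N - real k)\<^sup>2 * ((real k)\<^sup>2 + 2)
              + (real N - real k) * ((real k) ^ 3 + 10 * real k) - 4 * (real k)\<^sup>2 - 2)"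
  proof -
    have e: "real (N - k) = real N - real k" using assms(2) by (rule of_nat_diff)
    have cc: "real (card (Cs N k)) = real k * (real N - real k)" unfolding card_Cs of_nat_mult e ..
    show ?thesis unfolding cc e by (simp add: algebra_simps power2_eq_square power3_eq_cube)
  qed
  finally show ?thesis unfolding r_def .
qed

theorem proposition1:
  fixes N k :: nat
  assumes "1 \<le> k" and "k \<le> N"
  shows "(k * N - k\<^sup>2 \<ge> 2 \<longrightarrow>
           P N k 1 = fact (k * N - k\<^sup>2 - 2) * real k * (real N - real k) * (real N - 2 * real k))
       \<and> (k * N - k\<^sup>2 \<ge> 4 \<longrightarrow>
           P N k 2 = fact (k * N - k\<^sup>2 - 4) * real k * (real N - real k) *
             (real k * (real N - real k) ^ 3 - 2 * (real N - real k)\<^sup>2 * ((real k)\<^sup>2 + 2)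
              + (real N - real k) * ((real k) ^ 3 + 10 * real k) - 4 * (real k)\<^sup>2 - 2))"
  using P1[OF assms] P2[OF assms] by blast

end
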